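(* The map $\mathcal{A}\ni A\mapsto\mathcal{P}_A\in\mathrm{Fix}(\Pi)$ is injective.
   Context: mm-spaces are triples $(X,d_X,\mu_X)$ with $(X,d_X)$ complete separable metric and $\mu_X$ a Borel probability measure, with $X=\operatorname{supp}\mu_X$. $\mathcal{X}$ is the set of their isomorphism classes under measure-preserving isometries of supports. A pyramid is a nonempty subset of $\mathcal{X}$ that is closed for the box distance, downward closed under the Lipschitz order ($Y\prec X$ iff there is a 1-Lipschitz $f\colon X\to Y$ with $f_*\mu_X=\mu_Y$), and such that any two elements are dominated by a common element. $\Pi$ is the set of pyramids. $\mathbb{R}_+$ acts on $\Pi$ by $t\mathcal{P}=\{(X,t\,d_X,\mu_X):X\in\mathcal{P}\}$, and $\mathrm{Fix}(\Pi)$ is its fixed-point set. $\mathcal{A}$ is the set of monotone non-increasing sequences $A=\{a_i\}_{i\ge1}$ of nonnegative reals with $\sum a_i\le1$. $\mathcal{P}_A=\{X\in\mathcal{X}:\exists\{x_i\}_{i\ge1}\subset X\text{ with }\sum_i a_i\delta_{x_i}\le\mu_X\}$, which is a pyramid in $\mathrm{Fix}(\Pi)$. *)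

theory Defs
  imports "HOL-Probability.Probability"
begin

definition borel_sets_of :: "'a metric \<Rightarrow> 'a set set" where
  "borel_sets_of m = sigma_sets (mspace m) {U. openin (mtopology_of m) U}"

definition mm_space :: "'a metric \<Rightarrow> 'a measure \<Rightarrow> bool" where
  "mm_space m \<mu> \<longleftrightarrow>
     mcomplete_of m \<and> separable_space (mtopology_of m) \<and>
     space \<mu> = mspace m \<and> sets \<mu> = borel_sets_of m \<and> prob_space \<mu> \<and>
     (\<forall>x\<in>mspace m. \<forall>r>0. measure \<mu> (mball_of m x r) > 0)"

text \<open>The set \<A> of non-increasing nonnegative sequences with sum at most 1
  (indexed from 0 instead of 1).\<close>
definition seqA :: "(nat \<Rightarrow> real) set" where
  "seqA = {a. (\<forall>i. 0 \<le> a i) \<and> (\<forall>i. a (Suc i) \<le> a i) \<and> summable a \<and> suminf a \<le> 1}"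

text \<open>The pyramid P_A, represented by all mm-spaces whose underlying set is a
  subset of the reals (every complete separable metric space has cardinality
  at most the continuum, so every isomorphism class has such a representative,
  and membership is isomorphism-invariant).\<close>
definition pyrA :: "(nat \<Rightarrow> real) \<Rightarrow> (real metric \<times> real measure) set" where
  "pyrA a = {(m, \<mu>). mm_space m \<mu> \<and>
      (\<exists>x :: nat \<Rightarrow> real. (\<forall>i. x i \<in> mspace m) \<and>
         (\<forall>S\<in>sets \<mu>. (\<Sum>i. a i * indicator S (x i)) \<le> measure \<mu> S))}"

end

theory Submission
  imports Defs
begin

definition dm :: "real set \<Rightarrow> real metric" where
  "dm S = metric (S, \<lambda>x y. if x = y then 0 else 1)"

lemma dm_facts:
  "mspace (dm S) = S" "mdist (dm S) = discrete_metric.dd"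
  "mtopology_of (dm S) = discrete_topology S"
  "mcomplete_of (dm S)"
proof -
  interpret discrete_metric S .
  have e: "dm S = metric (S, dd)" by (simp add: dm_def dd_def)
  show "mspace (dm S) = S" "mdist (dm S) = discrete_metric.dd"
    unfolding e by simp_all
  show "mtopology_of (dm S) = discrete_topology S" unfolding e
    using mtopology_discrete_metric by simp
  show "mcomplete_of (dm S)" unfolding e using mcomplete_discrete_metric by simp
qed

lemma mm_pmf:
  fixes q :: "real pmf"
  shows "mm_space (dm (set_pmf q)) (restrict_space (measure_pmf q) (set_pmf q))"
proof -
  let ?S = "set_pmf q"
  have sets: "sets (restrict_space (measure_pmf q) ?S) = Pow ?S"
    by (auto simp: sets_restrict_space)
  have bor: "borel_sets_of (dm ?S) = Pow ?S"
  proof -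
    have "Collect (openin (discrete_topology ?S)) = Pow ?S" by auto
    then show ?thesis unfolding borel_sets_of_def dm_facts
      using sigma_algebra.sigma_sets_eq[OF sigma_algebra_Pow] by metis
  qed
  show ?thesis unfolding mm_space_def
  proof (intro conjI ballI allI impI)
    show "mcomplete_of (dm ?S)" by (rule dm_facts)
    show "separable_space (mtopology_of (dm ?S))"
      by (simp add: dm_facts separable_space_discrete_topology countable_set_pmf)
    show "space (restrict_space (measure_pmf q) ?S) = mspace (dm ?S)"
      by (simp add: dm_facts space_restrict_space)
    show "sets (restrict_space (measure_pmf q) ?S) = borel_sets_of (dm ?S)"
      using sets bor by simp
    show "prob_space (restrict_space (measure_pmf q) ?S)"
      by (rule prob_space_restrict_space) (auto simp: emeasure_pmf)
  next
    fix x r assume x: "x \<in> mspace (dm ?S)" and r: "(0::real) < r"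
    have xs: "x \<in> ?S" using x by (simp add: dm_facts)
    have sub: "{x} \<subseteq> mball_of (dm ?S) x r"
      using xs r by (simp add: dm_facts discrete_metric.dd_def)
    have ms: "mball_of (dm ?S) x r \<subseteq> ?S"
      by (auto simp: dm_facts)
    have "0 < pmf q x" using xs by (simp add: pmf_positive)
    also have "pmf q x = measure (measure_pmf q) {x}" by (simp add: measure_pmf_single)
    also have "\<dots> \<le> measure (measure_pmf q) (mball_of (dm ?S) x r)"
      by (rule measure_pmf.finite_measure_mono[OF sub]) simp
    also have "\<dots> = measure (restrict_space (measure_pmf q) ?S) (mball_of (dm ?S) x r)"
      by (rule measure_restrict_space[symmetric]) (use ms in auto)
    finally show "0 < measure (restrict_space (measure_pmf q) ?S) (mball_of (dm ?S) x r)" .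
  qed
qed


lemma key:
  fixes a b :: "nat \<Rightarrow> real"
  assumes aA: "a \<in> seqA" and bA: "b \<in> seqA" and eq: "\<forall>i<k. a i = b i" and lt: "a k < b k"
  shows "\<exists>X. X \<in> pyrA a \<and> X \<notin> pyrA b"
proof -
  have a0: "\<And>i. 0 \<le> a i" and adec: "decseq a" and asum: "summable a" and ale: "suminf a \<le> 1"
    using aA by (auto simp: seqA_def decseq_Suc_iff)
  have b0: "\<And>i. 0 \<le> b i" and bdec: "decseq b" and bsum: "summable b" and ble: "suminf b \<le> 1"
    using bA by (auto simp: seqA_def decseq_Suc_iff)
  define \<beta> where "\<beta> = b k"
  have bpos: "0 < \<beta>" using lt a0[of k] by (simp add: \<beta>_def)
  define r where "r = 1 - suminf a"
  have r0: "0 \<le> r" "r \<le> 1" using ale suminf_nonneg[OF asum a0] by (auto simp: r_def)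
  define N where "N = nat \<lceil>1/\<beta>\<rceil> + 1"
  have Npos: "0 < N" by (simp add: N_def)
  have "1/\<beta> < real N" unfolding N_def by linarith
  then have "1 < real N * \<beta>" using bpos by (simp add: field_simps)
  then have rN: "r / real N < \<beta>" using r0 Npos bpos
    by (simp add: divide_less_eq mult.commute)
  have rN0: "0 \<le> r / real N" using r0 by simp
  define g where "g n = (if n < N then r / real N else a (n - N))" for n
  have g0: "\<And>n. 0 \<le> g n" using a0 rN0 by (simp add: g_def)
  have "(\<lambda>i. g (i + N)) sums suminf a"
    using summable_sums[OF asum] by (simp add: g_def)
  moreover have "(\<Sum>i<N. g i) = r" using Npos by (simp add: g_def)
  ultimately have gs: "g sums 1" by (simp add: sums_iff_shift r_def)
  have int1: "(\<integral>\<^sup>+x. ennreal (g x) \<partial>count_space UNIV) = 1"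
    by (simp add: nn_integral_count_space_nat suminf_ennreal_eq[OF g0 gs])
  define p where "p = embed_pmf g"
  have pp: "pmf p n = g n" for n
    unfolding p_def by (rule pmf_embed_pmf[OF g0 int1])
  define q where "q = map_pmf real p"
  have pq: "pmf q (real n) = g n" for n
    unfolding q_def by (simp add: pmf_map_inj' inj_on_def pp)
  have Sq: "set_pmf q \<subseteq> range real" by (auto simp: q_def)
  define S where "S = set_pmf q"
  define \<mu> where "\<mu> = restrict_space (measure_pmf q) S"
  have mm: "mm_space (dm S) \<mu>" unfolding \<mu>_def S_def by (rule mm_pmf)
  have setsmu: "sets \<mu> = Pow S" by (auto simp: \<mu>_def sets_restrict_space)
  have mmu: "measure \<mu> A = measure (measure_pmf q) A" if "A \<subseteq> S" for A
    unfolding \<mu>_def by (rule measure_restrict_space) (use that in auto)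
  have inS: "real n \<in> S \<longleftrightarrow> 0 < g n" for n
    using g0[of n] by (auto simp: S_def set_pmf_iff pq)
  have S0: "S \<noteq> {}" by (simp add: S_def set_pmf_not_empty)
  then obtain y0 where y0: "y0 \<in> S" by blast
  define x where "x i = (if 0 < a i then real (i + N) else y0)" for i
  have inA: "(dm S, \<mu>) \<in> pyrA a"
    unfolding pyrA_def
  proof (clarsimp, intro conjI exI)
    show "mm_space (dm S) \<mu>" by (rule mm)
    show "\<forall>i. x i \<in> mspace (dm S)"
      using y0 inS by (auto simp: x_def dm_facts g_def simp del: of_nat_add)
    show "\<forall>A\<in>sets \<mu>. (\<Sum>i. a i * indicator A (x i)) \<le> measure \<mu> A"
    proof
      fix A assume "A \<in> sets \<mu>"
      then have AS: "A \<subseteq> S" by (simp add: setsmu)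
      define D where "D i = (if 0 < a i \<and> real (i + N) \<in> A then {real (i + N)} else {})" for i
      have "(\<lambda>i. measure (measure_pmf q) (D i)) sums measure (measure_pmf q) (\<Union>i. D i)"
        by (rule measure_pmf.finite_measure_UNION) (auto simp: disjoint_family_on_def D_def)
      moreover have "measure (measure_pmf q) (D i) = a i * indicator A (x i)" for i
        using a0[of i] pq[of "i+N"] by (auto simp: D_def x_def measure_pmf_single g_def simp del: of_nat_add)
      ultimately have "(\<Sum>i. a i * indicator A (x i)) = measure (measure_pmf q) (\<Union>i. D i)"
        by (simp add: sums_iff)
      also have "\<dots> \<le> measure (measure_pmf q) A"
        by (rule measure_pmf.finite_measure_mono) (auto simp: D_def split: if_splits)
      finally show "(\<Sum>i. a i * indicator A (x i)) \<le> measure \<mu> A" using mmu[OF AS] by simp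
    qed
  qed
  have notB: "(dm S, \<mu>) \<notin> pyrA b"
  proof
    assume "(dm S, \<mu>) \<in> pyrA b"
    then obtain y where yS: "\<And>i. y i \<in> S"
      and yc: "\<And>A. A \<subseteq> S \<Longrightarrow> (\<Sum>i. b i * indicator A (y i)) \<le> measure \<mu> A"
      unfolding pyrA_def by (auto simp: dm_facts setsmu)
    have bsm: "summable (\<lambda>i. b i * indicator A (y i))" for A
      by (rule summable_comparison_test'[OF bsum]) (auto simp: b0 indicator_def)
    define T where "T = (\<lambda>j. real (j + N)) ` {..<k}"
    have yT: "y i \<in> T" if ik: "i \<le> k" for i
    proof -
      obtain n where n: "y i = real n" using yS[of i] Sq unfolding S_def by blast
      have "(\<Sum>j\<in>{i}. b j * indicator {y i} (y j)) \<le> (\<Sum>j. b j * indicator {y i} (y j))"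
        by (rule sum_le_suminf[OF bsm]) (auto simp: b0 indicator_def)
      then have "b i \<le> (\<Sum>j. b j * indicator {y i} (y j))" by simp
      also have "\<dots> \<le> measure \<mu> {y i}" using yc[of "{y i}"] yS[of i] by simp
      also have "\<dots> = g n" using mmu[of "{y i}"] yS[of i] by (simp add: n measure_pmf_single pq)
      finally have "b i \<le> g n" by simp
      moreover have "\<beta> \<le> b i" unfolding \<beta>_def by (rule decseqD[OF bdec ik])
      ultimately have gb: "\<beta> \<le> g n" by simp
      have "N \<le> n" using gb rN by (auto simp: g_def split: if_splits)
      moreover have "n < N + k"
      proof (rule ccontr)
        assume "\<not> n < N + k"
        then have "a (n - N) \<le> a k" by (intro decseqD[OF adec]) auto
        then show False using gb lt \<open>N \<le> n\<close> by (simp add: g_def \<beta>_def)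
      qed
      ultimately have "y i = real ((n - N) + N)" "n - N < k" using n by auto
      then show ?thesis unfolding T_def by blast
    qed
    have TS: "T \<subseteq> S"
    proof
      fix t assume "t \<in> T"
      then obtain j where j: "j < k" "t = real (j + N)" unfolding T_def by blast
      have "\<beta> \<le> b j" unfolding \<beta>_def using j by (intro decseqD[OF bdec]) auto
      then have "0 < a j" using bpos eq j by simp
      then show "t \<in> S" using j inS[of "j+N"] by (simp add: g_def del: of_nat_add)
    qed
    have "measure \<mu> T = (\<Sum>t\<in>T. pmf q t)"
      using mmu[OF TS] by (simp add: T_def measure_measure_pmf_finite)
    also have "\<dots> = (\<Sum>j<k. a j)"
    proof -
      have "T = (\<lambda>j. real (j + N)) ` {..<k}" by (simp add: T_def)
      moreover have "inj_on (\<lambda>j. real (j + N)) {..<k}" by (auto simp: inj_on_def)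
      ultimately show ?thesis using pq by (simp add: sum.reindex g_def del: of_nat_add)
    qed
    finally have mT: "measure \<mu> T = (\<Sum>j<k. a j)" .
    have "(\<Sum>i<Suc k. b i * indicator T (y i)) \<le> (\<Sum>i. b i * indicator T (y i))"
      by (rule sum_le_suminf[OF bsm]) (auto simp: b0 indicator_def)
    also have "\<dots> \<le> (\<Sum>j<k. a j)" using yc[OF TS] mT by simp
    finally have "(\<Sum>i<Suc k. b i * indicator T (y i)) \<le> (\<Sum>j<k. a j)" .
    moreover have "(\<Sum>i<Suc k. b i * indicator T (y i)) = (\<Sum>i<Suc k. b i)"
      by (rule sum.cong) (auto simp: yT)
    moreover have "(\<Sum>i<Suc k. b i) = (\<Sum>j<k. a j) + \<beta>"
      using eq by (simp add: \<beta>_def)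
    ultimately show False using bpos by simp
  qed
  show ?thesis using inA notB by blast
qed

theorem lemma4p2:
  fixes a b :: "nat \<Rightarrow> real"
  assumes "a \<in> seqA" and "b \<in> seqA" and "pyrA a = pyrA b"
  shows "a = b"
proof (rule ccontr)
  assume "a \<noteq> b"
  then have ex: "\<exists>i. a i \<noteq> b i" by auto
  define k where "k = (LEAST i. a i \<noteq> b i)"
  have ne: "a k \<noteq> b k" unfolding k_def by (rule LeastI_ex[OF ex])
  have eq: "\<forall>i<k. a i = b i" unfolding k_def using not_less_Least by blast
  show False
  proof (cases "a k < b k")
    case True
    from key[OF assms(1,2) eq True] assms(3) show False by blast
  next
    case False
    then have "b k < a k" using ne by simp
    from key[OF assms(2,1) _ this] eq assms(3) show False by auto
  qed
qed

end
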